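(* Fix $b>0$. Let $(a_n)_{n\in\mathbb{N}}$ be real numbers with $a_1=0$ and $a_n=q_n+\sum_{m=2}^{n-1}p^{(1)}_{n,m}a_m$ for $n\ge2$, for a given real sequence $(q_n)_{n\ge2}$. If $q_n=O(n^{\alpha-1}/\log^{p-1}n)$ for some constants $\alpha\in(0,\infty)$ and $p\in[0,\infty)$, then $a_n=O(n^\alpha/\log^p n)$.
   Context: For the $\mathrm{Beta}(1,b)$-coalescent, i.e. $\Lambda(dx)=b(1-x)^{b-1}dx$ on $[0,1]$, set $\lambda_{n,k}=\int_0^1x^{k-2}(1-x)^{n-k}\Lambda(dx)$ and $\lambda_n=\sum_{k=2}^n\binom nk\lambda_{n,k}$. The first decrement $I_n$ of the block-counting process started at $n$ has law $\mathbb{P}\{I_n=k\}=\binom{n}{k+1}\lambda_{n,k+1}/\lambda_n$, $1\le k\le n-1$, and $p^{(1)}_{n,m}:=\mathbb{P}\{I_n=n-m\}$ for $1\le m\le n-1$. *)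

theory Defs
  imports "HOL-Analysis.Analysis" "HOL-Library.Landau_Symbols"
begin

text \<open>Beta(1,b)-coalescent: Lambda(dx) = b (1-x)^(b-1) dx on [0,1].\<close>

definition lam_nk :: "real \<Rightarrow> nat \<Rightarrow> nat \<Rightarrow> real" where
  "lam_nk b n k = integral {0..1}
     (\<lambda>x::real. x ^ (k - 2) * (1 - x) ^ (n - k) * (b * (1 - x) powr (b - 1)))"

definition lam_n :: "real \<Rightarrow> nat \<Rightarrow> real" where
  "lam_n b n = (\<Sum>k=2..n. real (n choose k) * lam_nk b n k)"

definition first_dec_prob :: "real \<Rightarrow> nat \<Rightarrow> nat \<Rightarrow> real" where
  "first_dec_prob b n k = real (n choose (k + 1)) * lam_nk b n (k + 1) / lam_n b n"

definition p1 :: "real \<Rightarrow> nat \<Rightarrow> nat \<Rightarrow> real" where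
  "p1 b n m = first_dec_prob b n (n - m)"

end

theory Submission
  imports Defs
begin

lemma Gamma_rec: "(x::real) > 0 \<Longrightarrow> Gamma (x+1) = x * Gamma x"
  using Gamma_plus1[of x] nonpos_Ints_nonpos[of x] by force

lemma beta_int:
  fixes c :: real
  assumes "c > -1"
  shows "((\<lambda>x. x^i * (1-x) powr c) has_integral (fact i * Gamma (c+1) / Gamma (c + real i + 2))) {0..1}"
  using assms
proof (induction i arbitrary: c)
  case 0
  have I: "((\<lambda>x. (1-x) powr c) has_integral ((\<lambda>x. -((1-x) powr (c+1)) / (c+1)) 1 - (\<lambda>x. -((1-x) powr (c+1)) / (c+1)) 0)) {0..1}"
  proof (rule fundamental_theorem_of_calculus_interior)
    show "continuous_on {0..1} (\<lambda>x. -((1-x) powr (c+1)) / (c+1))"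
      using 0 by (intro continuous_intros continuous_on_powr') auto
  next
    fix x :: real assume x: "x \<in> {0<..<1}"
    show "((\<lambda>x. -((1-x) powr (c+1)) / (c+1)) has_vector_derivative (1-x) powr c) (at x)"
      unfolding has_real_derivative_iff_has_vector_derivative[symmetric]
      by (insert x 0) (rule derivative_eq_intros refl | simp)+
  qed simp
  have G: "Gamma (c+2) = (c+1) * Gamma (c+1)"
    using Gamma_rec[of "c+1"] 0 by (simp add: add.assoc)
  have Gne: "Gamma (c+1) \<noteq> 0"
    by (rule less_imp_neq[symmetric], rule Gamma_real_pos) (use 0 in simp)
  have V: "fact 0 * Gamma (c+1) / Gamma (c + real 0 + 2) = 1 / (c+1)"
    using G Gne by simp
  show ?case using I 0 unfolding V by simp
next
  case (Suc i)
  have IH1: "((\<lambda>x. x^i * (1-x) powr (c+1)) has_integral (fact i * Gamma (c+2) / Gamma (c + real i + 3))) {0..1}"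
    using Suc.IH[of "c+1"] Suc.prems by (simp add: add_ac)
  have D: "((\<lambda>x. (real i + 1) * (x^i * (1-x) powr (c+1)) - (c+1) * (x^(Suc i) * (1-x) powr c)) has_integral
      ((\<lambda>x. x^(Suc i) * (1-x) powr (c+1)) 1 - (\<lambda>x. x^(Suc i) * (1-x) powr (c+1)) 0)) {0..1}"
  proof (rule fundamental_theorem_of_calculus_interior)
    show "continuous_on {0..1} (\<lambda>x. x^(Suc i) * (1-x) powr (c+1))"
      using Suc.prems by (intro continuous_intros continuous_on_powr') auto
  next
    fix x :: real assume x: "x \<in> {0<..<1}"
    show "((\<lambda>x. x^(Suc i) * (1-x) powr (c+1)) has_vector_derivative
        (real i + 1) * (x^i * (1-x) powr (c+1)) - (c+1) * (x^(Suc i) * (1-x) powr c)) (at x)"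
      unfolding has_real_derivative_iff_has_vector_derivative[symmetric]
      by (insert x Suc.prems) (rule derivative_eq_intros refl | simp)+
  qed simp
  have D0: "((\<lambda>x. (real i + 1) * (x^i * (1-x) powr (c+1)) - (c+1) * (x^(Suc i) * (1-x) powr c)) has_integral 0) {0..1}"
    using D by simp
  have H: "((\<lambda>x. ((real i + 1) * (x^i * (1-x) powr (c+1)) - ((real i + 1) * (x^i * (1-x) powr (c+1)) - (c+1) * (x^(Suc i) * (1-x) powr c))) / (c+1))
     has_integral (((real i + 1) * (fact i * Gamma (c+2) / Gamma (c + real i + 3)) - 0) / (c+1))) {0..1}"
    by (intro has_integral_divide has_integral_diff has_integral_mult_right IH1 D0)
  have c1: "c + 1 \<noteq> 0" using Suc.prems by simp
  have F: "(\<lambda>x. ((real i + 1) * (x^i * (1-x) powr (c+1)) - ((real i + 1) * (x^i * (1-x) powr (c+1)) - (c+1) * (x^(Suc i) * (1-x) powr c))) / (c+1))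
     = (\<lambda>x. x^(Suc i) * (1-x) powr c)"
    using c1 by (intro ext) simp
  have G: "Gamma (c+2) = (c+1) * Gamma (c+1)"
    using Gamma_rec[of "c+1"] Suc.prems by (simp add: add.assoc)
  have Gne3: "Gamma (c + real i + 3) \<noteq> 0"
    by (rule less_imp_neq[symmetric], rule Gamma_real_pos) (use Suc.prems in simp)
  have G3: "c + real (Suc i) + 2 = c + real i + 3" by simp
  have V: "((real i + 1) * (fact i * Gamma (c+2) / Gamma (c + real i + 3)) - 0) / (c+1)
      = fact (Suc i) * Gamma (c+1) / Gamma (c + real (Suc i) + 2)"
    unfolding G3 G using c1 by (simp add: fact_Suc mult_ac)
  show ?case using H unfolding F V .
qed


definition rr :: "real \<Rightarrow> nat \<Rightarrow> real" where
  "rr b j = Gamma (real j + b) / fact j"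

lemma lam_nk_formula:
  assumes b: "b > 0" and k: "1 \<le> k" "k < n"
  shows "lam_nk b n (k+1) = b * fact (k-1) * Gamma (real (n-k-1) + b) / Gamma (real n - 1 + b)"
proof -
  define c where "c = real (n-k-1) + (b - 1)"
  have c: "c > -1" using b by (simp add: c_def)
  have I: "((\<lambda>x. x^(k-1) * (1-x) powr c) has_integral (fact (k-1) * Gamma (c+1) / Gamma (c + real (k-1) + 2))) {0..1}"
    by (rule beta_int[OF c])
  have e1: "c + 1 = real (n-k-1) + b" by (simp add: c_def)
  have e2: "c + real (k-1) + 2 = real n - 1 + b" using k by (simp add: c_def of_nat_diff)
  have I2: "((\<lambda>x. x^(k+1-2) * (1-x)^(n-(k+1)) * (b * (1-x) powr (b-1))) has_integral
      (b * (fact (k-1) * Gamma (real (n-k-1) + b) / Gamma (real n - 1 + b)))) {0..1}"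
  proof (rule has_integral_spike_finite[where S="{1}"])
    show "((\<lambda>x. b * (x^(k-1) * (1-x) powr c)) has_integral (b * (fact (k-1) * Gamma (real (n-k-1) + b) / Gamma (real n - 1 + b)))) {0..1}"
      using has_integral_mult_right[OF I, of b] unfolding e1 e2 .
  next
    fix x :: real assume x: "x \<in> {0..1} - {1}"
    hence x1: "0 < 1 - x" by auto
    have "(1-x)^(n-(k+1)) = (1-x) powr real (n-k-1)"
      using x1 by (simp add: powr_realpow)
    hence "(1-x)^(n-(k+1)) * (1-x) powr (b-1) = (1-x) powr c"
      by (simp add: c_def powr_add)
    moreover have "k+1-2 = k-1" by simp
    ultimately show "x^(k+1-2) * (1-x)^(n-(k+1)) * (b * (1-x) powr (b-1)) = b * (x^(k-1) * (1-x) powr c)"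
      by (metis (no_types, lifting) mult.assoc mult.left_commute)
  qed simp
  show ?thesis unfolding lam_nk_def using integral_unique[OF I2] by simp
qed

lemma alg_aux: fixes f2 m f1 G C g b :: real
  shows "f2 \<noteq> 0 \<Longrightarrow> m \<noteq> 0 \<Longrightarrow> G \<noteq> 0 \<Longrightarrow>
   C * (b * f1 * g / G) = (b * (m * f1 * f2 * C) / G) * (g / f2 / m)"
  by (simp add: field_simps)

lemma weight_formula:
  assumes b: "b > 0" and k: "1 \<le> k" "k < n"
  shows "real (n choose (k+1)) * lam_nk b n (k+1) =
    (b * fact n / Gamma (real n - 1 + b)) * (rr b (n-k-1) / (real k * (real k + 1)))"
proof -
  have F: "fact (k+1) * fact (n - (k+1)) * (n choose (k+1)) = fact n"
    by (rule binomial_fact_lemma) (use k in simp)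
  have fk: "fact (k+1) = (real k * (real k + 1)) * fact (k-1)"
  proof -
    obtain j where j: "k = Suc j" using k by (cases k) auto
    show ?thesis unfolding j by (simp add: fact_Suc algebra_simps)
  qed
  have F2: "(real k * (real k + 1)) * fact (k-1) * fact (n-k-1) * real (n choose (k+1)) = fact n"
  proof -
    have F1: "fact (k+1) * fact (n-k-1) * real (n choose (k+1)) = (fact n :: real)"
      using arg_cong[OF F, of "real"] unfolding of_nat_mult of_nat_fact by simp
    show ?thesis using F1 unfolding fk by (simp add: ac_simps)
  qed
  have pos: "fact (n-k-1) > (0::real)" "real k > 0" using k by auto
  have G: "Gamma (real n - 1 + b) > 0"
    by (rule Gamma_real_pos) (use k b in simp)
  have m: "real k * (real k + 1) \<noteq> 0" using pos by simp
  show ?thesis unfolding lam_nk_formula[OF b k] rr_def F2[symmetric]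
    by (rule alg_aux) (use m G in auto)
qed


lemma rr_pos: "b > 0 \<Longrightarrow> rr b j > 0"
  unfolding rr_def by (intro divide_pos_pos Gamma_real_pos) auto

lemma rr_Suc: assumes "b > 0" shows "rr b (Suc j) = rr b j * (real j + b) / (real j + 1)"
proof -
  have "Gamma (real (Suc j) + b) = (real j + b) * Gamma (real j + b)"
    using Gamma_rec[of "real j + b"] assms by (simp add: add_ac)
  thus ?thesis unfolding rr_def by (simp add: fact_Suc field_simps)
qed

lemma rr_sum: assumes "b > 0" shows "(\<Sum>j<J. rr b j) = real J * rr b J / b"
proof (induction J)
  case 0 thus ?case by simp
next
  case (Suc J)
  have "(\<Sum>j<Suc J. rr b j) = real J * rr b J / b + rr b J" using Suc by simp
  also have "\<dots> = real (Suc J) * rr b (Suc J) / b"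
  proof -
    have "real (Suc J) * rr b (Suc J) = (real J + b) * rr b J"
      unfolding rr_Suc[OF assms] by (simp add: field_simps)
    thus ?thesis using assms by (simp add: add_divide_distrib distrib_right)
  qed
  finally show ?case .
qed

lemma exp_le_self: "x > 0 \<Longrightarrow> exp (1 - 1/x) \<le> (x::real)"
proof -
  assume x: "x > 0"
  have "ln (1/x) \<le> 1/x - 1" using x by (intro ln_le_minus_one) simp
  hence "1 - 1/x \<le> ln x" using x by (simp add: ln_div)
  hence "exp (1 - 1/x) \<le> exp (ln x)" by simp
  thus ?thesis using x by simp
qed

lemma self_le_exp: "(x::real) \<le> exp (x - 1)"
  using exp_ge_add_one_self[of "x-1"] by simp

lemma factor_upper: assumes b: "b > 0" and i: "J \<le> i"
  shows "(real i + b) / (real i + 1) \<le> exp (b / (real J + 1))"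
proof -
  have "(real i + b) / (real i + 1) \<le> exp ((real i + b) / (real i + 1) - 1)" by (rule self_le_exp)
  also have "(real i + b) / (real i + 1) - 1 = (b - 1) / (real i + 1)" by (simp add: field_simps)
  also have "(b - 1) / (real i + 1) \<le> b / (real J + 1)"
  proof -
    have "(b - 1) / (real i + 1) \<le> b / (real i + 1)" by (simp add: divide_right_mono)
    also have "\<dots> \<le> b / (real J + 1)" using b i by (intro divide_left_mono) auto
    finally show ?thesis .
  qed
  finally show ?thesis by simp
qed

lemma factor_lower: assumes b: "b > 0" and i: "J \<le> i"
  shows "exp (- 1 / (b * (real J + 1))) \<le> (real i + b) / (real i + 1)"
proof -
  have A: "exp (1 - 1 / ((real i + b) / (real i + 1))) \<le> (real i + b) / (real i + 1)"
    using b by (intro exp_le_self) simp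
  have E: "1 - 1 / ((real i + b) / (real i + 1)) = (b - 1) / (real i + b)"
    using b by (simp add: field_simps)
  have L: "- 1 / (b * (real J + 1)) \<le> (b - 1) / (real i + b)"
  proof (cases "b \<ge> 1")
    case True
    have "- 1 / (b * (real J + 1)) \<le> 0" using b by (simp add: divide_nonpos_pos)
    also have "0 \<le> (b - 1) / (real i + b)" using True b by simp
    finally show ?thesis .
  next
    case False
    have h1: "(1 - b) * (b * (real J + 1)) \<le> real i + b"
    proof -
      have "(1 - b) * (b * (real J + 1)) \<le> b * (real J + 1)"
        using False b by (simp add: mult_le_cancel_right1 mult_nonneg_nonneg)
      also have "\<dots> \<le> b * (real i + 1)" using b i by simp
      also have "\<dots> \<le> real i + b" using False b mult_left_le_one_le[of "real i" b] by (simp add: algebra_simps)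
      finally show ?thesis .
    qed
    have "(1 - b) / (real i + b) \<le> 1 / (b * (real J + 1))"
      using h1 b by (simp add: divide_simps mult_ac)
    moreover have "(b - 1) / (real i + b) = - ((1 - b) / (real i + b))"
      by (subst minus_divide_left) simp
    moreover have "- 1 / (b * (real J + 1)) = - (1 / (b * (real J + 1)))" by (rule minus_divide_left[symmetric])
    ultimately show ?thesis by linarith
  qed
  have "exp (- 1 / (b * (real J + 1))) \<le> exp ((b - 1) / (real i + b))"
    using L by simp
  thus ?thesis using A unfolding E by (rule order_trans)
qed

lemma rr_upper: assumes b: "b > 0"
  shows "rr b (J + m) \<le> rr b J * exp (b * real m / (real J + 1))"
proof (induction m)
  case 0 thus ?case by simp
next
  case (Suc m)
  have "rr b (J + Suc m) = rr b (J + m) * ((real (J+m) + b) / (real (J+m) + 1))"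
    using rr_Suc[OF b, of "J+m"] by simp
  also have "\<dots> \<le> rr b J * exp (b * real m / (real J + 1)) * exp (b / (real J + 1))"
    using Suc less_imp_le[OF rr_pos[OF b, of "J+m"]] less_imp_le[OF rr_pos[OF b, of "J"]] factor_upper[OF b, of J "J+m"] b
    by (intro mult_mono) auto
  also have "\<dots> = rr b J * exp (b * real (Suc m) / (real J + 1))"
    by (simp add: mult.assoc exp_add[symmetric] add_divide_distrib algebra_simps)
  finally show ?case .
qed

lemma rr_lower: assumes b: "b > 0"
  shows "rr b J * exp (- real m / (b * (real J + 1))) \<le> rr b (J + m)"
proof (induction m)
  case 0 thus ?case by simp
next
  case (Suc m)
  have "rr b J * exp (- real (Suc m) / (b * (real J + 1))) =
      rr b J * exp (- real m / (b * (real J + 1))) * exp (- 1 / (b * (real J + 1)))"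
    by (simp add: mult.assoc exp_add[symmetric] add_divide_distrib algebra_simps diff_divide_distrib)
  also have "\<dots> \<le> rr b (J + m) * ((real (J+m) + b) / (real (J+m) + 1))"
    using Suc less_imp_le[OF rr_pos[OF b, of "J"]] less_imp_le[OF rr_pos[OF b, of "J+m"]] factor_lower[OF b, of J "J+m"] b
    by (intro mult_mono) auto
  also have "\<dots> = rr b (J + Suc m)"
    using rr_Suc[OF b, of "J+m"] by simp
  finally show ?case .
qed


lemma telesc_aux: "(x::real) > 0 \<Longrightarrow> 1 - 1 / x + 1 / (x * (x + 1)) = 1 - 1 / (x + 1)"
proof -
  assume x: "x > 0"
  have "x * x > 0" using x by simp
  hence "x + x * x \<noteq> 0" using x by linarith
  moreover have "x + 1 \<noteq> 0" "x \<noteq> 0" using x by auto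
  ultimately show ?thesis by (simp add: field_simps)
qed

lemma telesc: "(\<Sum>k=1..K. 1 / (real k * (real k + 1))) = 1 - 1 / (real K + 1)"
proof (induction K)
  case 0 thus ?case by simp
next
  case (Suc K)
  have "(\<Sum>k=1..Suc K. 1 / (real k * (real k + 1))) = 1 - 1 / (real K + 1) + 1 / ((real K + 1) * (real K + 2))"
    using Suc by (simp add: add_ac)
  also have "\<dots> = 1 - 1 / (real (Suc K) + 1)" using telesc_aux[of "real K + 1"] by (simp add: add_ac)
  finally show ?case .
qed

lemma harm_lower: "(\<Sum>k=1..K. 1 / (real k + 1)) \<ge> ln (real K + 2) - ln 2"
proof (induction K)
  case 0 thus ?case by simp
next
  case (Suc K)
  have "1 + 1 / (real K + 2) = (real K + 3) / (real K + 2)" by (simp add: field_simps)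
  hence "ln (real K + 3) - ln (real K + 2) = ln (1 + 1 / (real K + 2))"
    by (simp add: ln_div)
  also have "\<dots> \<le> 1 / (real K + 2)" by (rule ln_add_one_self_le_self) simp
  finally have "ln (real K + 3) - ln (real K + 2) \<le> 1 / (real K + 2)" .
  thus ?case using Suc by (simp add: add_ac)
qed

lemma sum_upper:
  assumes b: "b > 0" and n: "n \<ge> 4"
  shows "(\<Sum>k=1..n-1. rr b (n-k-1) / (real k * (real k + 1))) \<le> rr b (n - n div 2 - 1) * (exp b + 1 / b)"
proof -
  define K where "K = n div 2"
  define J where "J = n - K - 1"
  have KJ: "K \<le> J + 1" "J \<le> K" "1 \<le> K" "K < n - 1" "J + K + 1 = n" using n by (auto simp: K_def J_def)
  have rJ: "rr b J > 0" by (rule rr_pos[OF b])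
  have split: "{1..n-1} = {1..K} \<union> {K+1..n-1}" using KJ by auto
  have "(\<Sum>k=1..n-1. rr b (n-k-1) / (real k * (real k + 1))) =
      (\<Sum>k=1..K. rr b (n-k-1) / (real k * (real k + 1))) + (\<Sum>k=K+1..n-1. rr b (n-k-1) / (real k * (real k + 1)))"
    unfolding split by (rule sum.union_disjoint) auto
  also have "(\<Sum>k=1..K. rr b (n-k-1) / (real k * (real k + 1))) \<le> (\<Sum>k=1..K. rr b J * exp b * (1 / (real k * (real k + 1))))"
  proof (rule sum_mono)
    fix k assume k: "k \<in> {1..K}"
    have e: "n - k - 1 = J + (K - k)" using k KJ by auto
    have "rr b (n-k-1) \<le> rr b J * exp (b * real (K-k) / (real J + 1))"
      unfolding e by (rule rr_upper[OF b])
    also have "\<dots> \<le> rr b J * exp b"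
    proof -
      have "real (K - k) \<le> real J + 1" using KJ k by auto
      hence "b * real (K-k) / (real J + 1) \<le> b" using b by (simp add: divide_simps mult_left_le)
      thus ?thesis using rJ by simp
    qed
    finally have "rr b (n-k-1) \<le> rr b J * exp b" .
    thus "rr b (n-k-1) / (real k * (real k + 1)) \<le> rr b J * exp b * (1 / (real k * (real k + 1)))"
      using k by (simp add: divide_right_mono)
  qed
  also have "\<dots> = rr b J * exp b * (1 - 1 / (real K + 1))" by (simp only: sum_distrib_left[symmetric] telesc)
  also have "\<dots> \<le> rr b J * exp b" using rJ by (simp add: mult_left_le)
  also have "(\<Sum>k=K+1..n-1. rr b (n-k-1) / (real k * (real k + 1))) \<le> (\<Sum>k=K+1..n-1. rr b (n-k-1) / ((real K + 1) * (real K + 2)))"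
  proof (rule sum_mono)
    fix k assume k: "k \<in> {K+1..n-1}"
    have "(real K + 1) * (real K + 2) \<le> real k * (real k + 1)" using k by (intro mult_mono) auto
    thus "rr b (n-k-1) / (real k * (real k + 1)) \<le> rr b (n-k-1) / ((real K + 1) * (real K + 2))"
    proof (rule divide_left_mono)
      show "0 \<le> rr b (n-k-1)" using rr_pos[OF b, of "n-k-1"] by simp
      have "real k * (real k + 1) > 0" "(real K + 1) * (real K + 2) > 0" using k by auto
      thus "0 < real k * (real k + 1) * ((real K + 1) * (real K + 2))" by (rule mult_pos_pos)
    qed
  qed
  also have "\<dots> = (\<Sum>k=K+1..n-1. rr b (n-k-1)) / ((real K + 1) * (real K + 2))"
    by (simp add: sum_divide_distrib)
  also have "(\<Sum>k=K+1..n-1. rr b (n-k-1)) = (\<Sum>j<J. rr b j)"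
    by (rule sum.reindex_bij_witness[where i="\<lambda>j. n - j - 1" and j="\<lambda>k. n - k - 1"]) (use KJ in auto)
  also have "\<dots> = real J * rr b J / b" by (rule rr_sum[OF b])
  also have "real J * rr b J / b / ((real K + 1) * (real K + 2)) \<le> rr b J / b"
  proof -
    have h: "(real K + 1) * (real K + 2) = real K * real K + 3 * real K + 2" by (simp add: algebra_simps)
    have "real J \<le> real K + 1" using KJ by simp
    moreover have "0 \<le> real K * real K" by simp
    ultimately have "real J \<le> (real K + 1) * (real K + 2)" unfolding h by linarith
    hence "real J / ((real K + 1) * (real K + 2)) \<le> 1" by simp
    hence "real J / ((real K + 1) * (real K + 2)) * (rr b J / b) \<le> rr b J / b"
      using rJ b by (intro mult_left_le_one_le) auto
    moreover have "real J * rr b J / b / ((real K + 1) * (real K + 2)) = real J / ((real K + 1) * (real K + 2)) * (rr b J / b)"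
      by simp
    ultimately show ?thesis by (simp add: mult.commute)
  qed
  finally show ?thesis unfolding K_def[symmetric] J_def[symmetric] by (simp add: algebra_simps)
qed

lemma sum_lower:
  assumes b: "b > 0" and n: "n \<ge> 4" and ln4: "ln (real n) \<ge> 4"
  shows "(\<Sum>k=1..n div 2. real k * (rr b (n-k-1) / (real k * (real k + 1)))) \<ge> rr b (n - n div 2 - 1) * exp (- 1 / b) * (ln (real n) / 2)"
proof -
  define K where "K = n div 2"
  define J where "J = n - K - 1"
  have KJ: "K \<le> J + 1" "J \<le> K" "1 \<le> K" "K < n - 1" "J + K + 1 = n" using n by (auto simp: K_def J_def)
  have rJ: "rr b J > 0" by (rule rr_pos[OF b])
  have "(\<Sum>k=1..K. real k * (rr b (n-k-1) / (real k * (real k + 1)))) \<ge> (\<Sum>k=1..K. rr b J * exp (- 1 / b) * (1 / (real k + 1)))"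
  proof (rule sum_mono)
    fix k assume k: "k \<in> {1..K}"
    have e: "n - k - 1 = J + (K - k)" using k KJ by auto
    have "rr b J * exp (- 1 / b) \<le> rr b J * exp (- real (K-k) / (b * (real J + 1)))"
    proof -
      have "real (K - k) \<le> real J + 1" using KJ k by auto
      hence "real (K - k) / (b * (real J + 1)) \<le> 1 / b" using b by (simp add: divide_simps)
      hence "- 1 / b \<le> - real (K-k) / (b * (real J + 1))" by (simp add: minus_divide_left[symmetric] del: minus_divide_left)
      thus ?thesis using rJ by simp
    qed
    also have "\<dots> \<le> rr b (n-k-1)" unfolding e by (rule rr_lower[OF b])
    finally have "rr b J * exp (- 1 / b) \<le> rr b (n-k-1)" .
    moreover have "real k * (rr b (n-k-1) / (real k * (real k + 1))) = rr b (n-k-1) / (real k + 1)" using k by simp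
    ultimately show "rr b J * exp (- 1 / b) * (1 / (real k + 1)) \<le> real k * (rr b (n-k-1) / (real k * (real k + 1)))"
      by (simp add: divide_right_mono)
  qed
  moreover have "(\<Sum>k=1..K. rr b J * exp (- 1 / b) * (1 / (real k + 1))) = rr b J * exp (- 1 / b) * (\<Sum>k=1..K. 1 / (real k + 1))"
    by (simp add: sum_distrib_left)
  moreover have "(\<Sum>k=1..K. 1 / (real k + 1)) \<ge> ln (real n) / 2"
  proof -
    have "n \<le> 2 * K + 1" unfolding K_def by auto
    hence "real n \<le> real (2 * K + 1)" by (simp only: of_nat_le_iff)
    hence "real n \<le> 2 * (real K + 2)" by simp
    hence "ln (real n) \<le> ln (2 * (real K + 2))" using n by (subst ln_le_cancel_iff) auto
    hence "ln (real n) \<le> ln 2 + ln (real K + 2)" using ln_mult[of 2 "real K + 2"] by simp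
    moreover have "ln (2::real) \<le> 1" using ln_2_less_1 by simp
    ultimately show ?thesis using harm_lower[of K] ln4 by linarith
  qed
  ultimately have "(\<Sum>k=1..K. real k * (rr b (n-k-1) / (real k * (real k + 1)))) \<ge> rr b J * exp (- 1 / b) * (ln (real n) / 2)"
    using rJ by (smt (verit) exp_gt_zero mult_left_mono mult_pos_pos)
  thus ?thesis unfolding K_def J_def .
qed


definition FF :: "real \<Rightarrow> real \<Rightarrow> real \<Rightarrow> real" where
  "FF \<alpha> p x = x powr \<alpha> / ln x powr p"

lemma FF_exp: "x > 1 \<Longrightarrow> FF \<alpha> p x = exp (\<alpha> * ln x - p * ln (ln x))"
  unfolding FF_def powr_def by (simp add: exp_diff mult.commute)

lemma FF_pos: "x > 1 \<Longrightarrow> FF \<alpha> p x > 0"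
  using FF_exp by simp

lemma ln_diff_upper: "0 < z \<Longrightarrow> z \<le> y \<Longrightarrow> ln y - ln z \<le> (y - z) / (z::real)"
proof -
  assume z: "0 < z" "z \<le> y"
  have "ln (y / z) \<le> y / z - 1" using z by (intro ln_le_minus_one) simp
  moreover have "ln (y / z) = ln y - ln z" using z by (simp add: ln_div)
  moreover have "y / z - 1 = (y - z) / z" using z by (simp add: field_simps)
  ultimately show ?thesis by simp
qed

lemma ln_diff_lower: "0 < z \<Longrightarrow> z \<le> y \<Longrightarrow> (y - z) / y \<le> ln y - ln (z::real)"
proof -
  assume z: "0 < z" "z \<le> y"
  have "ln (z / y) \<le> z / y - 1" using z by (intro ln_le_minus_one) simp
  moreover have "ln (z / y) = ln z - ln y" using z by (simp add: ln_div)
  moreover have "z / y - 1 = - ((y - z) / y)" using z by (simp add: field_simps)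
  ultimately show ?thesis by simp
qed

lemma H_diff:
  fixes \<alpha> p m x :: real
  assumes a: "\<alpha> > 0" and p: "p \<ge> 0" and m: "1 < m" "m \<le> x" and lm: "2 * p / \<alpha> \<le> ln m"
  shows "(\<alpha>/2) * (ln x - ln m) \<le> (\<alpha> * ln x - p * ln (ln x)) - (\<alpha> * ln m - p * ln (ln m))"
proof -
  have lm0: "0 < ln m" using m(1) by (rule ln_gt_zero)
  have lx: "ln m \<le> ln x" using m by simp
  have d0: "0 \<le> ln x - ln m" using lx by simp
  have "ln (ln x) - ln (ln m) \<le> (ln x - ln m) / ln m" by (rule ln_diff_upper[OF lm0 lx])
  hence "p * (ln (ln x) - ln (ln m)) \<le> p * ((ln x - ln m) / ln m)" using p by (rule mult_left_mono)
  also have "p * ((ln x - ln m) / ln m) = (p / ln m) * (ln x - ln m)" by simp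
  also have "\<dots> \<le> (\<alpha> / 2) * (ln x - ln m)"
  proof (rule mult_right_mono[OF _ d0])
    have "2 * p \<le> \<alpha> * ln m" using lm a by (simp add: divide_simps mult.commute)
    thus "p / ln m \<le> \<alpha> / 2" using lm0 by (simp add: divide_simps mult.commute)
  qed
  finally have "p * (ln (ln x) - ln (ln m)) \<le> (\<alpha> / 2) * (ln x - ln m)" .
  moreover have "p * (ln (ln x) - ln (ln m)) = p * ln (ln x) - p * ln (ln m)" by (simp add: algebra_simps)
  moreover have "(\<alpha> / 2) * (ln x - ln m) = (\<alpha> * ln x) / 2 - (\<alpha> * ln m) / 2" by (simp add: right_diff_distrib)
  ultimately show ?thesis by linarith
qed

lemma FF_grow:
  assumes a: "\<alpha> > 0" and p: "p \<ge> 0" and m: "1 < m" "m \<le> x" and lm: "2 * p / \<alpha> \<le> ln m"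
  shows "FF \<alpha> p m * (1 + (\<alpha>/2) * (ln x - ln m)) \<le> FF \<alpha> p x"
proof -
  define d where "d = (\<alpha> * ln x - p * ln (ln x)) - (\<alpha> * ln m - p * ln (ln m))"
  have x1: "x > 1" using m by simp
  have "FF \<alpha> p x = FF \<alpha> p m * exp d"
    unfolding FF_exp[OF x1] FF_exp[OF m(1)] d_def by (simp add: exp_add[symmetric])
  moreover have "1 + (\<alpha>/2) * (ln x - ln m) \<le> exp d"
    using H_diff[OF assms] exp_ge_add_one_self[of d] unfolding d_def by linarith
  ultimately show ?thesis using FF_pos[OF m(1), of \<alpha> p] by simp
qed

lemma FF_diff:
  assumes a: "\<alpha> > 0" and p: "p \<ge> 0" and m: "1 < m" "m \<le> x" and lm: "2 * p / \<alpha> \<le> ln m"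
  shows "FF \<alpha> p m * ((\<alpha>/2) * ((x - m) / x)) \<le> FF \<alpha> p x - FF \<alpha> p m"
proof -
  have "(x - m) / x \<le> ln x - ln m" using m by (intro ln_diff_lower) auto
  hence "(\<alpha>/2) * ((x - m) / x) \<le> (\<alpha>/2) * (ln x - ln m)" by (rule mult_left_mono) (use a in simp)
  hence "FF \<alpha> p m * ((\<alpha>/2) * ((x - m) / x)) \<le> FF \<alpha> p m * ((\<alpha>/2) * (ln x - ln m))"
    by (rule mult_left_mono) (use FF_pos[OF m(1), of \<alpha> p] in auto)
  also have "\<dots> \<le> FF \<alpha> p x - FF \<alpha> p m" using FF_grow[OF assms] by (simp add: algebra_simps)
  finally show ?thesis .
qed

lemma FF_mono:
  assumes a: "\<alpha> > 0" and p: "p \<ge> 0" and m: "1 < m" "m \<le> x" and lm: "2 * p / \<alpha> \<le> ln m"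
  shows "FF \<alpha> p m \<le> FF \<alpha> p x"
proof -
  have "0 \<le> FF \<alpha> p m * ((\<alpha>/2) * ((x - m) / x))"
    using FF_pos[OF m(1), of \<alpha> p] a m by simp
  thus ?thesis using FF_diff[OF assms] by simp
qed

lemma FF_half:
  assumes a: "\<alpha> > 0" and p: "p \<ge> 0" and m: "1 < m" "x / 2 \<le> m" "m \<le> x"
  shows "FF \<alpha> p x / 2 powr \<alpha> \<le> FF \<alpha> p m"
proof -
  have x1: "x > 1" using m by simp
  have "x powr \<alpha> / 2 powr \<alpha> = (x / 2) powr \<alpha>" using x1 by (simp add: powr_divide)
  also have "\<dots> \<le> m powr \<alpha>" using m a x1 by (intro powr_mono2) auto
  finally have num: "x powr \<alpha> / 2 powr \<alpha> \<le> m powr \<alpha>" .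
  have den: "ln m powr p \<le> ln x powr p" using m p by (intro powr_mono2) auto
  have denpos: "ln m powr p > 0" using ln_gt_zero[OF m(1)] by simp
  have denpos2: "ln x powr p > 0" using ln_gt_zero[OF x1] by simp
  have "FF \<alpha> p x / 2 powr \<alpha> = (x powr \<alpha> / 2 powr \<alpha>) / ln x powr p" unfolding FF_def by simp
  also have "\<dots> \<le> (x powr \<alpha> / 2 powr \<alpha>) / ln m powr p"
    using den denpos denpos2 by (intro divide_left_mono mult_pos_pos) auto
  also have "\<dots> \<le> m powr \<alpha> / ln m powr p" using num denpos by (intro divide_right_mono) auto
  finally show ?thesis unfolding FF_def .
qed


definition Dn :: "real \<Rightarrow> nat \<Rightarrow> real" where
  "Dn b n = b * fact n / Gamma (real n - 1 + b)"

definition uu :: "real \<Rightarrow> nat \<Rightarrow> nat \<Rightarrow> real" where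
  "uu b n k = rr b (n-k-1) / (real k * (real k + 1))"

lemma Dn_pos: "b > 0 \<Longrightarrow> n \<ge> 1 \<Longrightarrow> Dn b n > 0"
  unfolding Dn_def by (intro divide_pos_pos mult_pos_pos Gamma_real_pos) auto

lemma uu_pos: "b > 0 \<Longrightarrow> k \<ge> 1 \<Longrightarrow> uu b n k > 0"
  unfolding uu_def using rr_pos[of b] by (intro divide_pos_pos mult_pos_pos) auto

lemma lam_n_formula:
  assumes b: "b > 0" and n: "n \<ge> 2"
  shows "lam_n b n = Dn b n * (\<Sum>k=1..n-1. uu b n k)"
proof -
  have "lam_n b n = (\<Sum>k=1+1..(n-1)+1. real (n choose k) * lam_nk b n k)"
  proof -
    have eq: "{1+1..(n-1)+1} = {2..n}" using n by auto
    show ?thesis by (simp only: lam_n_def eq)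
  qed
  also have "\<dots> = (\<Sum>k=1..n-1. real (n choose (k+1)) * lam_nk b n (k+1))"
    by (rule sum.shift_bounds_cl_nat_ivl)
  also have "\<dots> = (\<Sum>k=1..n-1. Dn b n * uu b n k)"
  proof (rule sum.cong)
    fix k assume k: "k \<in> {1..n-1}"
    show "real (n choose (k+1)) * lam_nk b n (k+1) = Dn b n * uu b n k"
      unfolding Dn_def uu_def by (rule weight_formula[OF b]) (use k in auto)
  qed simp
  finally show ?thesis by (simp add: sum_distrib_left)
qed

lemma p1_formula:
  assumes b: "b > 0" and n: "n \<ge> 2" and m: "1 \<le> m" "m < n"
  shows "p1 b n m = uu b n (n-m) / (\<Sum>k=1..n-1. uu b n k)"
proof -
  have "real (n choose (n - m + 1)) * lam_nk b n (n - m + 1) = Dn b n * uu b n (n-m)"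
    using weight_formula[OF b, of "n-m" n] m unfolding Dn_def uu_def by simp
  thus ?thesis unfolding p1_def first_dec_prob_def lam_n_formula[OF b n]
    using Dn_pos[OF b, of n] n by simp
qed

lemma U_pos: "b > 0 \<Longrightarrow> n \<ge> 2 \<Longrightarrow> (\<Sum>k=1..n-1. uu b n k) > 0"
  by (intro sum_pos) (auto intro: uu_pos)


definition cc :: "real \<Rightarrow> real \<Rightarrow> real" where
  "cc \<alpha> b = \<alpha> * exp (- 1 / b) / (4 * 2 powr \<alpha> * (exp b + 1 / b))"

lemma cc_pos: "\<alpha> > 0 \<Longrightarrow> b > 0 \<Longrightarrow> cc \<alpha> b > 0"
  unfolding cc_def by (intro divide_pos_pos mult_pos_pos add_pos_pos) auto

lemma alg2: fixes a e P E Fn L N r :: real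
  assumes "P \<noteq> 0" "E \<noteq> 0" "N \<noteq> 0"
  shows "a * e / (4 * P * E) * (Fn * L / N) * (r * E) = a * Fn / (2 * P * N) * (r * e * (L / 2))"
  using assms by (simp add: field_simps)

lemma drift_key:
  fixes \<alpha> p b X0 :: real and n :: nat
  assumes b: "b > 0" and a: "\<alpha> > 0" and p: "p \<ge> 0" and X0: "X0 > 1" and lX0: "2 * p / \<alpha> \<le> ln X0"
    and n4: "n \<ge> 4" and nX: "2 * X0 + 2 \<le> real n" and ln4: "ln (real n) \<ge> 4"
    and hM: "\<And>m. 2 \<le> m \<Longrightarrow> m < n \<Longrightarrow> FF \<alpha> p (real m) \<le> FF \<alpha> p (real n)"
  shows "(\<Sum>k=1..n-2. uu b n k * FF \<alpha> p (real (n-k))) \<le>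
     (FF \<alpha> p (real n) - cc \<alpha> b * (FF \<alpha> p (real n) * ln (real n) / real n)) * (\<Sum>k=1..n-1. uu b n k)"
proof -
  define F where "F = FF \<alpha> p"
  define Fn where "Fn = F (real n)"
  define U where "U = (\<Sum>k=1..n-1. uu b n k)"
  define G where "G = Fn * ln (real n) / real n"
  define K where "K = n div 2"
  define J where "J = n - K - 1"
  define T where "T = (\<lambda>k. uu b n k * (Fn - F (real (n-k))))"
  define A where "A = \<alpha> * Fn / (2 * 2 powr \<alpha> * real n)"
  have n1: "real n > 1" using n4 by simp
  have Fnpos: "Fn > 0" unfolding Fn_def F_def using FF_pos[OF n1] .
  have Gpos: "G \<ge> 0" unfolding G_def using Fnpos ln4 by simp
  have Apos: "A \<ge> 0" unfolding A_def using a Fnpos by simp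
  have rJ: "rr b J > 0" by (rule rr_pos[OF b])
  have KJ: "1 \<le> K" "K \<le> n - 2" using n4 by (auto simp: K_def)
  have Usplit: "U = (\<Sum>k=1..n-2. uu b n k) + uu b n (n-1)"
  proof -
    have "{1..n-1} = insert (n-1) {1..n-2}" using n4 by auto
    hence "U = sum (uu b n) (insert (n-1) {1..n-2})" unfolding U_def by simp
    also have "\<dots> = uu b n (n-1) + sum (uu b n) {1..n-2}" using n4 by (subst sum.insert) auto
    finally show ?thesis by simp
  qed
  have diff: "Fn * U - (\<Sum>k=1..n-2. uu b n k * F (real (n-k))) = (\<Sum>k=1..n-2. T k) + uu b n (n-1) * Fn"
    unfolding Usplit T_def by (simp add: algebra_simps sum_distrib_left sum_subtractf)
  have Tnn: "T k \<ge> 0" if k: "k \<in> {1..n-2}" for k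
  proof -
    have "F (real (n-k)) \<le> Fn" unfolding F_def Fn_def by (rule hM) (use k in auto)
    thus ?thesis unfolding T_def using uu_pos[OF b, of k n] k by simp
  qed
  have drop: "(\<Sum>k=1..K. T k) \<le> (\<Sum>k=1..n-2. T k)"
    by (rule sum_mono2) (use KJ Tnn in auto)
  have "uu b n (n-1) > 0" by (rule uu_pos[OF b]) (use n4 in simp)
  hence last: "uu b n (n-1) * Fn \<ge> 0" using Fnpos by simp
  have Tk: "A * (real k * uu b n k) \<le> T k" if k: "k \<in> {1..K}" for k
  proof -
    have kn: "k \<le> n" "real k \<le> real n / 2" using k n4 unfolding K_def by auto
    have m1: "1 < real (n-k)" and m2: "real (n-k) \<le> real n" and m3: "real n / 2 \<le> real (n-k)"
      and m4: "X0 \<le> real (n-k)"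
      using kn nX X0 by (auto simp: of_nat_diff)
    have lm: "2 * p / \<alpha> \<le> ln (real (n-k))"
      using lX0 m4 X0 by (smt (verit) ln_le_cancel_iff)
    have d1: "F (real (n-k)) * ((\<alpha>/2) * ((real n - real (n-k)) / real n)) \<le> Fn - F (real (n-k))"
      unfolding F_def Fn_def by (rule FF_diff[OF a p m1 m2 lm])
    have d2: "Fn / 2 powr \<alpha> \<le> F (real (n-k))"
      unfolding F_def Fn_def by (rule FF_half[OF a p m1 m3 m2])
    have e: "real n - real (n-k) = real k" using kn by (simp add: of_nat_diff)
    have "A * real k = Fn / 2 powr \<alpha> * ((\<alpha>/2) * (real k / real n))"
      unfolding A_def by (simp add: field_simps)
    also have "\<dots> \<le> F (real (n-k)) * ((\<alpha>/2) * (real k / real n))"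
      using d2 a by (intro mult_right_mono) auto
    also have "\<dots> \<le> Fn - F (real (n-k))" using d1 unfolding e .
    finally have "A * real k \<le> Fn - F (real (n-k))" .
    hence "uu b n k * (A * real k) \<le> uu b n k * (Fn - F (real (n-k)))"
      using uu_pos[OF b, of k n] k by (intro mult_left_mono) auto
    thus ?thesis unfolding T_def by (simp add: ac_simps)
  qed
  have low1: "A * (\<Sum>k=1..K. real k * uu b n k) \<le> (\<Sum>k=1..K. T k)"
    unfolding sum_distrib_left by (rule sum_mono) (rule Tk)
  have low2: "rr b J * exp (- 1 / b) * (ln (real n) / 2) \<le> (\<Sum>k=1..K. real k * uu b n k)"
    using sum_lower[OF b n4 ln4] unfolding K_def J_def uu_def .
  have up: "U \<le> rr b J * (exp b + 1 / b)"
    using sum_upper[OF b n4] unfolding U_def J_def K_def uu_def .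
  have "cc \<alpha> b * G * U \<le> cc \<alpha> b * G * (rr b J * (exp b + 1 / b))"
    using up cc_pos[OF a b] Gpos by (intro mult_left_mono) auto
  also have "\<dots> = A * (rr b J * exp (- 1 / b) * (ln (real n) / 2))"
  proof -
    have "exp b + 1 / b > 0" using b by (intro add_pos_pos) auto
    moreover have "2 powr \<alpha> > 0" by simp
    moreover have "real n > 0" using n4 by simp
    ultimately show ?thesis unfolding cc_def G_def A_def by (intro alg2) auto
  qed
  also have "\<dots> \<le> A * (\<Sum>k=1..K. real k * uu b n k)"
    using low2 Apos by (intro mult_left_mono) auto
  also have "\<dots> \<le> (\<Sum>k=1..n-2. T k) + uu b n (n-1) * Fn" using low1 drop last by linarith
  finally have main: "cc \<alpha> b * G * U \<le> Fn * U - (\<Sum>k=1..n-2. uu b n k * F (real (n-k)))"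
    unfolding diff .
  show ?thesis using main unfolding F_def[symmetric] Fn_def[symmetric] U_def[symmetric] G_def[symmetric]
    by (simp add: algebra_simps)
qed


lemma drift_p1:
  fixes \<alpha> p b X0 :: real and n :: nat
  assumes b: "b > 0" and a: "\<alpha> > 0" and p: "p \<ge> 0" and X0: "X0 > 1" and lX0: "2 * p / \<alpha> \<le> ln X0"
    and n4: "n \<ge> 4" and nX: "2 * X0 + 2 \<le> real n" and ln4: "ln (real n) \<ge> 4"
    and hM: "\<And>m. 2 \<le> m \<Longrightarrow> m < n \<Longrightarrow> FF \<alpha> p (real m) \<le> FF \<alpha> p (real n)"
  shows "(\<Sum>m=2..n-1. p1 b n m * FF \<alpha> p (real m)) \<le>
     FF \<alpha> p (real n) - cc \<alpha> b * (FF \<alpha> p (real n) * ln (real n) / real n)"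
proof -
  define U where "U = (\<Sum>k=1..n-1. uu b n k)"
  have n2: "n \<ge> 2" using n4 by simp
  have Upos: "U > 0" unfolding U_def by (rule U_pos[OF b n2])
  have "(\<Sum>m=2..n-1. p1 b n m * FF \<alpha> p (real m)) = (\<Sum>m=2..n-1. uu b n (n-m) * FF \<alpha> p (real m) / U)"
    by (rule sum.cong) (auto simp: p1_formula[OF b n2] U_def)
  also have "\<dots> = (\<Sum>m=2..n-1. uu b n (n-m) * FF \<alpha> p (real m)) / U"
    by (simp add: sum_divide_distrib)
  also have "(\<Sum>m=2..n-1. uu b n (n-m) * FF \<alpha> p (real m)) = (\<Sum>k=1..n-2. uu b n k * FF \<alpha> p (real (n-k)))"
    by (rule sum.reindex_bij_witness[where i="\<lambda>k. n - k" and j="\<lambda>m. n - m"]) (use n4 in auto)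
  also have "(\<Sum>k=1..n-2. uu b n k * FF \<alpha> p (real (n-k))) / U \<le>
     FF \<alpha> p (real n) - cc \<alpha> b * (FF \<alpha> p (real n) * ln (real n) / real n)"
    using drift_key[OF assms] Upos unfolding U_def[symmetric] by (simp add: pos_divide_le_eq)
  finally show ?thesis .
qed

lemma p1_nonneg: "b > 0 \<Longrightarrow> 1 \<le> m \<Longrightarrow> m < n \<Longrightarrow> p1 b n m \<ge> 0"
  using p1_formula[of b n m] U_pos[of b n] uu_pos[of b "n-m" n]
  by (cases "n \<ge> 2") (auto intro!: divide_nonneg_pos less_imp_le)


theorem lemma6p2:
  fixes b \<alpha> p :: real and a q :: "nat \<Rightarrow> real"
  assumes b_pos: "b > 0"
    and a1: "a 1 = 0"
    and rec: "\<And>n. n \<ge> 2 \<Longrightarrow> a n = q n + (\<Sum>m=2..n-1. p1 b n m * a m)"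
    and alpha_pos: "\<alpha> > 0" and p_nonneg: "p \<ge> 0"
    and q_bound: "q \<in> O(\<lambda>n. real n powr (\<alpha> - 1) / ln (real n) powr (p - 1))"
  shows "a \<in> O(\<lambda>n. real n powr \<alpha> / ln (real n) powr p)"
proof -
  define F where "F = FF \<alpha> p"
  define X0 where "X0 = max 2 (exp (2 * p / \<alpha>))"
  have X0: "X0 > 1" unfolding X0_def by simp
  have lX0: "2 * p / \<alpha> \<le> ln X0"
  proof -
    have "exp (2 * p / \<alpha>) \<le> X0" unfolding X0_def by simp
    hence "ln (exp (2 * p / \<alpha>)) \<le> ln X0" using X0 by (subst ln_le_cancel_iff) auto
    thus ?thesis by simp
  qed
  define M0 where "M0 = (\<Sum>m=2..nat \<lceil>X0\<rceil>. \<bar>F (real m)\<bar>)"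
  have M0: "F (real m) \<le> M0" if "2 \<le> m" "real m < X0" for m
  proof -
    have "real m \<le> of_int \<lceil>X0\<rceil>" using that(2) le_of_int_ceiling[of X0] by linarith
    hence "of_int (int m) \<le> (of_int \<lceil>X0\<rceil> :: real)" by simp
    hence "int m \<le> \<lceil>X0\<rceil>" by (simp only: of_int_le_iff)
    hence "m \<in> {2..nat \<lceil>X0\<rceil>}" using that(1) by auto
    hence "\<bar>F (real m)\<bar> \<le> M0" unfolding M0_def
      by (intro member_le_sum) auto
    thus ?thesis by simp
  qed
  have FX0: "F X0 > 0" unfolding F_def by (rule FF_pos[OF X0])
  define T0 where "T0 = ln X0 + 2 * M0 / (\<alpha> * F X0)"
  have M0n: "M0 \<le> F (real n)" if "real n \<ge> X0" "ln (real n) \<ge> T0" for n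
  proof -
    have "F X0 * (1 + (\<alpha>/2) * (ln (real n) - ln X0)) \<le> F (real n)"
      unfolding F_def by (rule FF_grow[OF alpha_pos p_nonneg X0 that(1) lX0])
    moreover have "M0 \<le> F X0 * (1 + (\<alpha>/2) * (ln (real n) - ln X0))"
    proof -
      have "(\<alpha>/2) * (ln (real n) - ln X0) \<ge> (\<alpha>/2) * (2 * M0 / (\<alpha> * F X0))"
        using that(2) alpha_pos unfolding T0_def by (intro mult_left_mono) auto
      also have "(\<alpha>/2) * (2 * M0 / (\<alpha> * F X0)) = M0 / F X0" using alpha_pos FX0 by (simp add: field_simps)
      finally have "F X0 * (M0 / F X0) \<le> F X0 * ((\<alpha>/2) * (ln (real n) - ln X0))"
        using FX0 by (intro mult_left_mono) auto
      moreover have "F X0 * (M0 / F X0) = M0" using FX0 by simp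
      ultimately show ?thesis using FX0 by (simp add: algebra_simps)
    qed
    ultimately show ?thesis by linarith
  qed
  define Nr where "Nr = max (2 * X0 + 2) (exp (max 4 T0))"
  define N where "N = nat \<lceil>Nr\<rceil>"
  have Ncond: "n \<ge> 4 \<and> 2 * X0 + 2 \<le> real n \<and> ln (real n) \<ge> 4 \<and> ln (real n) \<ge> T0 \<and> real n \<ge> X0" if "n \<ge> N" for n
  proof -
    have "Nr \<le> real n" using that unfolding N_def by linarith
    hence h1: "2 * X0 + 2 \<le> real n" "exp (max 4 T0) \<le> real n" unfolding Nr_def by auto
    have npos: "real n > 0" using h1(2) by (smt (verit) exp_gt_zero)
    have "max 4 T0 \<le> ln (real n)" using h1(2) npos by (metis exp_le_cancel_iff exp_ln)
    thus ?thesis using h1 X0 by auto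
  qed
  have hM: "F (real m) \<le> F (real n)" if "n \<ge> N" "2 \<le> m" "m < n" for m n
  proof (cases "real m \<ge> X0")
    case True
    have "1 < real m" using True X0 by simp
    moreover have "2 * p / \<alpha> \<le> ln (real m)" using lX0 True X0 by (smt (verit) ln_le_cancel_iff)
    ultimately show ?thesis unfolding F_def using that alpha_pos p_nonneg by (intro FF_mono) auto
  next
    case False
    hence "F (real m) \<le> M0" using that by (intro M0) auto
    also have "M0 \<le> F (real n)" using Ncond[OF that(1)] by (intro M0n) auto
    finally show ?thesis .
  qed
  define c where "c = cc \<alpha> b"
  have cpos: "c > 0" unfolding c_def by (rule cc_pos[OF alpha_pos b_pos])
  define G where "G = (\<lambda>n::nat. F (real n) * ln (real n) / real n)"
  have drift: "(\<Sum>m=2..n-1. p1 b n m * F (real m)) \<le> F (real n) - c * G n" if "n \<ge> N" for n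
    unfolding F_def c_def G_def
    by (rule drift_p1[OF b_pos alpha_pos p_nonneg X0 lX0]) (use Ncond[OF that] hM[OF that] in \<open>auto simp: F_def\<close>)
  from q_bound obtain Kq where Kq: "Kq > 0"
    "eventually (\<lambda>n. norm (q n) \<le> Kq * norm (real n powr (\<alpha> - 1) / ln (real n) powr (p - 1))) at_top"
    by (elim landau_o.bigE)
  then obtain Nq where Nq: "\<And>n. n \<ge> Nq \<Longrightarrow> \<bar>q n\<bar> \<le> Kq * \<bar>real n powr (\<alpha> - 1) / ln (real n) powr (p - 1)\<bar>"
    by (auto simp: eventually_at_top_linorder)
  have gG: "\<bar>real n powr (\<alpha> - 1) / ln (real n) powr (p - 1)\<bar> = G n" if "n \<ge> 2" for n :: nat
  proof -
    have n1: "real n > 1" using that by simp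
    have L: "ln (real n) > 0" using n1 by simp
    have e1: "real n powr (\<alpha> - 1) = real n powr \<alpha> / real n" using n1 by (simp add: powr_diff)
    have e2: "ln (real n) powr (p - 1) = ln (real n) powr p / ln (real n)" using L by (simp add: powr_diff)
    have nz: "ln (real n) powr p \<noteq> 0" "ln (real n) \<noteq> 0" "real n \<noteq> 0" using L n1 by auto
    have "real n powr (\<alpha> - 1) / ln (real n) powr (p - 1) = G n"
      unfolding G_def F_def FF_def e1 e2 using nz by (simp add: field_simps)
    moreover have "G n \<ge> 0" unfolding G_def F_def using FF_pos[OF n1, of \<alpha> p] L n1 by simp
    ultimately show ?thesis by simp
  qed
  define N1 where "N1 = max (max N Nq) 2"
  define C where "C = Kq / c + (\<Sum>m=2..N1. \<bar>a m\<bar> / F (real m))"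
  have Fpos: "F (real m) > 0" if "m \<ge> 2" for m :: nat unfolding F_def using that by (intro FF_pos) simp
  have Cnn: "(\<Sum>m=2..N1. \<bar>a m\<bar> / F (real m)) \<ge> 0"
  proof (intro sum_nonneg)
    fix m assume "m \<in> {2..N1}"
    hence "F (real m) > 0" by (intro Fpos) auto
    thus "0 \<le> \<bar>a m\<bar> / F (real m)" by simp
  qed
  have Cge: "C \<ge> Kq / c" unfolding C_def using Cnn by simp
  have Cpos: "C \<ge> 0" using Cge Kq cpos by (smt (verit) divide_pos_pos)
  have bound: "\<bar>a n\<bar> \<le> C * F (real n)" if "n \<ge> 2" for n
    using that
  proof (induction n rule: less_induct)
    case (less n)
    show ?case
    proof (cases "n \<le> N1")
      case True
      have "\<bar>a n\<bar> / F (real n) \<le> (\<Sum>m=2..N1. \<bar>a m\<bar> / F (real m))"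
      proof (rule member_le_sum)
        show "n \<in> {2..N1}" using True less.prems by auto
        fix m assume "m \<in> {2..N1} - {n}"
        hence "F (real m) > 0" by (intro Fpos) auto
        thus "0 \<le> \<bar>a m\<bar> / F (real m)" by simp
      qed simp
      hence "\<bar>a n\<bar> / F (real n) \<le> C" unfolding C_def using Kq cpos by (smt (verit) divide_pos_pos)
      thus ?thesis using Fpos[OF less.prems] by (simp add: pos_divide_le_eq)
    next
      case False
      hence nN: "n \<ge> N" "n \<ge> Nq" "n \<ge> 2" unfolding N1_def by auto
      have "\<bar>a n\<bar> \<le> \<bar>q n\<bar> + \<bar>\<Sum>m=2..n-1. p1 b n m * a m\<bar>" using rec[OF nN(3)] by simp
      also have "\<bar>\<Sum>m=2..n-1. p1 b n m * a m\<bar> \<le> (\<Sum>m=2..n-1. \<bar>p1 b n m * a m\<bar>)" by (rule sum_abs)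
      also have "\<dots> \<le> (\<Sum>m=2..n-1. p1 b n m * (C * F (real m)))"
      proof (rule sum_mono)
        fix m assume m: "m \<in> {2..n-1}"
        have p0: "p1 b n m \<ge> 0" using m by (intro p1_nonneg[OF b_pos]) auto
        have "\<bar>a m\<bar> \<le> C * F (real m)" using m by (intro less.IH) auto
        thus "\<bar>p1 b n m * a m\<bar> \<le> p1 b n m * (C * F (real m))"
          using p0 by (simp add: abs_mult mult_left_mono)
      qed
      also have "\<dots> = C * (\<Sum>m=2..n-1. p1 b n m * F (real m))"
        by (simp add: sum_distrib_left mult_ac)
      also have "\<dots> \<le> C * (F (real n) - c * G n)"
        using drift[OF nN(1)] Cpos by (intro mult_left_mono) auto
      also have "\<bar>q n\<bar> \<le> Kq * G n" using Nq[OF nN(2)] gG[OF nN(3)] by metis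
      finally have "\<bar>a n\<bar> \<le> Kq * G n + C * (F (real n) - c * G n)" by simp
      also have "\<dots> = C * F (real n) - (C * c - Kq) * G n" by (simp add: algebra_simps)
      also have "\<dots> \<le> C * F (real n)"
      proof -
        have "C * c \<ge> Kq" using Cge cpos by (simp add: pos_divide_le_eq)
        moreover have "G n \<ge> 0" using gG[OF nN(3)] by (metis abs_ge_zero)
        ultimately show ?thesis by (simp add: mult_nonneg_nonneg)
      qed
      finally show ?thesis .
    qed
  qed
  show ?thesis
  proof (rule bigoI[where c=C])
    show "eventually (\<lambda>n. norm (a n) \<le> C * norm (real n powr \<alpha> / ln (real n) powr p)) at_top"
      unfolding eventually_at_top_linorder
    proof (intro exI allI impI)
      fix n :: nat assume n: "n \<ge> 2"
      have "norm (real n powr \<alpha> / ln (real n) powr p) = F (real n)"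
        using Fpos[OF n] unfolding F_def FF_def by simp
      thus "norm (a n) \<le> C * norm (real n powr \<alpha> / ln (real n) powr p)" using bound[OF n] Fpos[OF n] by simp
    qed
  qed
qed


end
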